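(* Let $R$ be a discrete valuation ring of characteristic $p>0$ with field of fractions $K$. Let $H$ be a primitively generated $K$-Hopf algebra of rank $p^n$, let $t_1,\dots,t_n$ be a $K$-basis of $\mathrm{Prim}(H)$ with associated matrix $B\in M_n(R)$ (so $t_i^p=\sum_j b_{j,i}t_j$). For $\Theta=(\theta_{j,i})\in\mathrm{GL}_n(K)$ with $A=\Theta^{-1}B\Theta^{(p)}\in M_n(R)$, let $H_\Theta=R[\{\sum_j\theta_{j,i}t_j:1\le i\le n\}]\subseteq H$ be the corresponding $R$-Hopf order (the image of the $R$-Hopf algebra with associated matrix $A$ under $u_i\mapsto\sum_j\theta_{j,i}t_j$). Let $\Theta$ be such a matrix and let $\Theta'\in \mathrm{GL}_n(K)$. Then the following are equivalent: (a) $A'=\Theta'^{-1}B\Theta'^{(p)}\in M_n(R)$ and $H_{\Theta'}=H_\Theta$ (i.e. $A$ and $A'$ are associated to the same Hopf order); (b) $\Theta'=\Theta U$ for some $U\in\mathrm{GL}_n(R)$.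
   Context: $\Theta^{(p)}$ denotes the matrix obtained from $\Theta$ by raising each entry to the $p$-th power. All Hopf algebras are commutative, cocommutative, finitely generated projective, of $p$-power rank. $t$ is primitive if $\Delta(t)=t\otimes1+1\otimes t$; $\mathrm{Prim}(H)$ is the module of primitives; $H$ is primitively generated if generated as an algebra by its primitives. An $R$-Hopf order in a $K$-Hopf algebra $H$ is a finitely generated projective $R$-submodule which is an $R$-Hopf algebra under the inherited operations and spans $H$ over $K$. *)

theory Defs
  imports "Jordan_Normal_Form.Matrix"
begin

definition is_dvr_with_frac_field :: "'k::field set \<Rightarrow> bool" where
  "is_dvr_with_frac_field R \<longleftrightarrow>
     0 \<in> R \<and> 1 \<in> R \<and> (\<forall>x\<in>R. \<forall>y\<in>R. x + y \<in> R \<and> x * y \<in> R \<and> - x \<in> R) \<and>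
     (\<exists>\<pi>. \<pi> \<in> R \<and> \<pi> \<noteq> 0 \<and> inverse \<pi> \<notin> R \<and>
        (\<forall>x. x \<noteq> 0 \<longrightarrow> (\<exists>u k. u \<in> R \<and> inverse u \<in> R \<and> x = u * \<pi> powi k)))"

definition mat_over :: "nat \<Rightarrow> 'a set \<Rightarrow> 'a mat set" where
  "mat_over n S = {M. M \<in> carrier_mat n n \<and> (\<forall>i<n. \<forall>j<n. M $$ (i,j) \<in> S)}"

definition GL_over :: "nat \<Rightarrow> 'a::semiring_1 set \<Rightarrow> 'a mat set" where
  "GL_over n S = {M. M \<in> mat_over n S \<and>
      (\<exists>N \<in> mat_over n S. M * N = 1\<^sub>m n \<and> N * M = 1\<^sub>m n)}"

definition mat_inv :: "nat \<Rightarrow> 'a::semiring_1 mat \<Rightarrow> 'a mat" where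
  "mat_inv n M = (SOME N. N \<in> carrier_mat n n \<and> M * N = 1\<^sub>m n \<and> N * M = 1\<^sub>m n)"

definition mat_frob :: "nat \<Rightarrow> 'a::monoid_mult mat \<Rightarrow> 'a mat" where
  "mat_frob p M = map_mat (\<lambda>x. x ^ p) M"

inductive_set subalg_gen :: "'k set \<Rightarrow> ('k \<Rightarrow> 'h::comm_ring_1) \<Rightarrow> 'h set \<Rightarrow> 'h set"
  for R iota G where
  scal: "r \<in> R \<Longrightarrow> iota r \<in> subalg_gen R iota G"
| gen: "g \<in> G \<Longrightarrow> g \<in> subalg_gen R iota G"
| add: "x \<in> subalg_gen R iota G \<Longrightarrow> y \<in> subalg_gen R iota G \<Longrightarrow> x + y \<in> subalg_gen R iota G"
| mult: "x \<in> subalg_gen R iota G \<Longrightarrow> y \<in> subalg_gen R iota G \<Longrightarrow> x * y \<in> subalg_gen R iota G"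

definition H_order :: "'k set \<Rightarrow> ('k \<Rightarrow> 'h::comm_ring_1) \<Rightarrow> nat \<Rightarrow> (nat \<Rightarrow> 'h) \<Rightarrow> 'k mat \<Rightarrow> 'h set" where
  "H_order R iota n t \<Theta> =
     subalg_gen R iota {(\<Sum>j<n. iota (\<Theta> $$ (j,i)) * t j) | i. i < n}"

definition exps :: "nat \<Rightarrow> nat \<Rightarrow> (nat \<Rightarrow> nat) set" where
  "exps p n = {a. (\<forall>i<n. a i < p) \<and> (\<forall>i\<ge>n. a i = 0)}"

definition monom_t :: "nat \<Rightarrow> (nat \<Rightarrow> 'h::comm_ring_1) \<Rightarrow> (nat \<Rightarrow> nat) \<Rightarrow> 'h" where
  "monom_t n t a = (\<Prod>i<n. t i ^ a i)"

definition prim_gen_algebra ::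
  "nat \<Rightarrow> nat \<Rightarrow> ('k::field \<Rightarrow> 'h::comm_ring_1) \<Rightarrow> (nat \<Rightarrow> 'h) \<Rightarrow> 'k mat \<Rightarrow> bool" where
  "prim_gen_algebra p n iota t B \<longleftrightarrow>
     iota 0 = 0 \<and> iota 1 = 1 \<and> (\<forall>x y. iota (x + y) = iota x + iota y) \<and>
     (\<forall>x y. iota (x * y) = iota x * iota y) \<and>
     (\<forall>c. (\<Sum>a\<in>exps p n. iota (c a) * monom_t n t a) = 0 \<longrightarrow> (\<forall>a\<in>exps p n. c a = 0)) \<and>
     (\<forall>h. \<exists>c. h = (\<Sum>a\<in>exps p n. iota (c a) * monom_t n t a)) \<and>
     (\<forall>i<n. t i ^ p = (\<Sum>j<n. iota (B $$ (j,i)) * t j))"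

end

theory Submission
  imports Defs "HOL-Computational_Algebra.Primes"
begin

lemma of_nat_p_zero_dvd:
  fixes x :: "'a::comm_ring_1"
  assumes "of_nat p = (0::'a)" "p dvd m" shows "(of_nat m :: 'a) = 0"
  using assms by (auto elim!: dvdE)

lemma frob_add:
  fixes x y :: "'a::comm_ring_1"
  assumes p: "prime p" and c: "of_nat p = (0::'a)"
  shows "(x + y) ^ p = x ^ p + y ^ p"
proof -
  have p0: "p > 0" using p prime_gt_0_nat by blast
  have "(x + y) ^ p = (\<Sum>k\<le>p. of_nat (p choose k) * x ^ k * y ^ (p - k))"
    by (rule binomial_ring)
  also have "\<dots> = (\<Sum>k\<in>{0,p}. of_nat (p choose k) * x ^ k * y ^ (p - k))"
  proof (rule sum.mono_neutral_right)
    show "\<forall>k\<in>{..p} - {0, p}. of_nat (p choose k) * x ^ k * y ^ (p - k) = 0"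
    proof
      fix k assume k: "k \<in> {..p} - {0, p}"
      then have "p dvd (p choose k)" using p by (intro dvd_choose_prime) auto
      then have "(of_nat (p choose k) :: 'a) = 0" by (rule of_nat_p_zero_dvd[OF c])
      then show "of_nat (p choose k) * x ^ k * y ^ (p - k) = 0" by simp
    qed
  qed auto
  also have "\<dots> = x ^ p + y ^ p" using p0 by (simp add: add.commute)
  finally show ?thesis .
qed

lemma frob_sum:
  fixes f :: "'b \<Rightarrow> 'a::comm_ring_1"
  assumes p: "prime p" and c: "of_nat p = (0::'a)" and A: "finite A"
  shows "(\<Sum>x\<in>A. f x) ^ p = (\<Sum>x\<in>A. f x ^ p)"
  using A
proof induction
  case empty then show ?case using p prime_gt_0_nat by (simp add: zero_power)
next
  case (insert a A) then show ?case by (simp add: frob_add[OF p c])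
qed

lemma mult_idx:
  assumes "A \<in> carrier_mat n n" "B \<in> carrier_mat n n" "i < n" "j < n"
  shows "(A * B) $$ (i,j) = (\<Sum>k<n. A $$ (i,k) * B $$ (k,j))"
  using assms by (simp add: scalar_prod_def atLeast0LessThan)


definition subr :: "'k::comm_ring_1 set \<Rightarrow> bool" where
  "subr Q \<longleftrightarrow> 0 \<in> Q \<and> 1 \<in> Q \<and> (\<forall>x\<in>Q. \<forall>y\<in>Q. x + y \<in> Q \<and> x * y \<in> Q)"

lemma subr_sum:
  assumes "subr Q" "finite A" "\<And>x. x \<in> A \<Longrightarrow> f x \<in> Q" shows "sum f A \<in> Q"
  using assms(2,3) by (induction A rule: finite_induct) (use assms(1) in \<open>auto simp: subr_def\<close>)

lemma subr_UNIV: "subr UNIV" by (simp add: subr_def)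

lemma monom_upd:
  assumes "j < n"
  shows "monom_t n s (b(j := k)) = s j ^ k * (\<Prod>i\<in>{..<n}-{j}. s i ^ b i)"
proof -
  have "monom_t n s (b(j := k)) = s j ^ (b(j:=k)) j * (\<Prod>i\<in>{..<n}-{j}. s i ^ (b(j:=k)) i)"
    unfolding monom_t_def using assms by (subst prod.remove[of _ j]) auto
  also have "(\<Prod>i\<in>{..<n}-{j}. s i ^ (b(j:=k)) i) = (\<Prod>i\<in>{..<n}-{j}. s i ^ b i)"
    by (rule prod.cong) auto
  finally show ?thesis by (simp only: fun_upd_same)
qed

lemma monom_split:
  assumes "j < n"
  shows "monom_t n s b = s j ^ b j * (\<Prod>i\<in>{..<n}-{j}. s i ^ b i)"
  using monom_upd[OF assms, of s b "b j"] by simp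

lemma monom_suc:
  assumes "j < n"
  shows "monom_t n s (b(j := b j + 1)) = s j * monom_t n s b"
  using monom_upd[OF assms, of s b "b j + 1"] monom_split[OF assms, of s b] by simp

lemma monom_Suc:
  assumes "j < n"
  shows "monom_t n s (b(j := Suc (b j))) = s j * monom_t n s b"
  using monom_suc[OF assms] by simp

lemma monom_add: "monom_t n s (\<lambda>i. a i + b i) = monom_t n s a * monom_t n s b"
  unfolding monom_t_def by (simp only: power_add prod.distrib)

lemma monom_zero: "monom_t n s (\<lambda>_. 0) = 1"
  unfolding monom_t_def by simp

lemma sum_upd:
  fixes n :: nat
  assumes "j < n"
  shows "(\<Sum>i<n. (b(j:=k)) i) + b j = (\<Sum>i<n. b i) + (k::nat)"
proof -
  have "(\<Sum>i<n. (b(j:=k)) i) = k + (\<Sum>i\<in>{..<n}-{j}. b i)"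
  proof -
    have "(\<Sum>i\<in>{..<n}-{j}. (b(j:=k)) i) = (\<Sum>i\<in>{..<n}-{j}. b i)" by (rule sum.cong) auto
    moreover have "(\<Sum>i<n. (b(j:=k)) i) = (b(j:=k)) j + (\<Sum>i\<in>{..<n}-{j}. (b(j:=k)) i)"
      using assms by (intro sum.remove) auto
    ultimately show ?thesis by simp
  qed
  moreover have "(\<Sum>i<n. b i) = b j + (\<Sum>i\<in>{..<n}-{j}. b i)"
    using assms by (intro sum.remove) auto
  ultimately show ?thesis by simp
qed

lemma finite_exps: "finite (exps p n)"
proof -
  have "exps p n \<subseteq> {f. \<forall>x. (x \<in> {..<n} \<longrightarrow> f x \<in> {..<p}) \<and> (x \<notin> {..<n} \<longrightarrow> f x = 0)}"
    unfolding exps_def by auto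
  then show ?thesis by (rule finite_subset) (rule finite_set_of_finite_funs; simp)
qed


lemma mat_inv_props:
  assumes "M \<in> GL_over n S"
  shows "mat_inv n M \<in> carrier_mat n n" "M * mat_inv n M = 1\<^sub>m n" "mat_inv n M * M = 1\<^sub>m n"
proof -
  obtain N where "N \<in> carrier_mat n n" "M * N = 1\<^sub>m n" "N * M = 1\<^sub>m n"
    using assms unfolding GL_over_def mat_over_def by blast
  then have "\<exists>N. N \<in> carrier_mat n n \<and> M * N = 1\<^sub>m n \<and> N * M = 1\<^sub>m n" by blast
  from someI_ex[OF this] show "mat_inv n M \<in> carrier_mat n n" "M * mat_inv n M = 1\<^sub>m n" "mat_inv n M * M = 1\<^sub>m n"
    unfolding mat_inv_def by blast+
qed

lemma GL_carrier: "M \<in> GL_over n S \<Longrightarrow> M \<in> carrier_mat n n"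
  unfolding GL_over_def mat_over_def by blast

lemma mat_inv_unique:
  assumes M: "M \<in> GL_over n S" and X: "X \<in> carrier_mat n n" and MX: "M * X = 1\<^sub>m n"
  shows "mat_inv n M = X"
proof -
  note I = mat_inv_props[OF M]
  have Mc: "M \<in> carrier_mat n n" by (rule GL_carrier[OF M])
  have "mat_inv n M = mat_inv n M * (M * X)" using MX I(1) by simp
  also have "\<dots> = (mat_inv n M * M) * X" using I(1) Mc X by simp
  also have "\<dots> = X" using I(3) X by simp
  finally show ?thesis .
qed

lemma mat_over_mult:
  assumes Q: "subr Q" and X: "X \<in> mat_over n Q" and Y: "Y \<in> mat_over n Q"
  shows "X * Y \<in> mat_over n Q"
proof -
  have Xc: "X \<in> carrier_mat n n" and Yc: "Y \<in> carrier_mat n n" using X Y by (auto simp: mat_over_def)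
  have "(X * Y) $$ (i,j) \<in> Q" if "i < n" "j < n" for i j
    unfolding mult_idx[OF Xc Yc that]
    using X Y Q that by (intro subr_sum) (auto simp: mat_over_def subr_def)
  then show ?thesis using Xc Yc by (auto simp: mat_over_def)
qed

lemma subr_pow: "subr Q \<Longrightarrow> x \<in> Q \<Longrightarrow> x ^ k \<in> Q"
  by (induction k) (auto simp: subr_def)

lemma mat_over_frob:
  assumes Q: "subr Q" and X: "X \<in> mat_over n Q"
  shows "mat_frob p X \<in> mat_over n Q"
  using X subr_pow[OF Q] by (auto simp: mat_over_def mat_frob_def)

lemma frob_mult:
  fixes X Y :: "'a::comm_ring_1 mat"
  assumes p: "prime p" and c: "of_nat p = (0::'a)"
    and X: "X \<in> carrier_mat n n" and Y: "Y \<in> carrier_mat n n"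
  shows "mat_frob p (X * Y) = mat_frob p X * mat_frob p Y"
proof -
  have FX: "mat_frob p X \<in> carrier_mat n n" and FY: "mat_frob p Y \<in> carrier_mat n n"
    using X Y by (auto simp: mat_frob_def)
  show ?thesis
  proof (rule eq_matI)
    fix i j assume i: "i < dim_row (mat_frob p X * mat_frob p Y)" and j: "j < dim_col (mat_frob p X * mat_frob p Y)"
    then have i': "i < n" and j': "j < n" using FX FY by auto
    have "mat_frob p (X * Y) $$ (i,j) = ((X * Y) $$ (i,j)) ^ p"
      using X Y i' j' by (simp add: mat_frob_def)
    also have "\<dots> = (\<Sum>k<n. (X $$ (i,k) * Y $$ (k,j)) ^ p)"
      unfolding mult_idx[OF X Y i' j'] by (rule frob_sum[OF p c]) simp
    also have "\<dots> = (mat_frob p X * mat_frob p Y) $$ (i,j)"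
      unfolding mult_idx[OF FX FY i' j'] using X Y i' j'
      by (intro sum.cong refl) (simp add: mat_frob_def power_mult_distrib)
    finally show "mat_frob p (X * Y) $$ (i,j) = (mat_frob p X * mat_frob p Y) $$ (i,j)" .
  qed (use X Y FX FY in \<open>auto simp: mat_frob_def\<close>)
qed

lemma subalg_sum:
  assumes "0 \<in> R" "iota 0 = 0" "finite A" "\<And>x. x \<in> A \<Longrightarrow> f x \<in> subalg_gen R iota G"
  shows "sum f A \<in> subalg_gen R iota G"
  using assms(3,4)
proof (induction A rule: finite_induct)
  case empty
  then show ?case using subalg_gen.scal[OF assms(1), of iota G] assms(2) by simp
next
  case (insert x F)
  then show ?case by (simp add: subalg_gen.add)
qed

lemma subalg_mono:
  assumes "G' \<subseteq> subalg_gen R iota G"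
  shows "subalg_gen R iota G' \<subseteq> subalg_gen R iota G"
proof
  fix x assume "x \<in> subalg_gen R iota G'"
  then show "x \<in> subalg_gen R iota G"
    by induction (use assms in \<open>auto intro: subalg_gen.intros\<close>)
qed

locale setting =
  fixes p n :: nat and iota :: "'k::field \<Rightarrow> 'h::comm_ring_1"
  assumes p: "prime p" and charp: "of_nat p = (0::'k)"
    and i0: "iota 0 = 0" and i1: "iota 1 = 1"
    and iadd: "\<And>x y. iota (x + y) = iota x + iota y"
    and imult: "\<And>x y. iota (x * y) = iota x * iota y"
begin

lemma iota_sum: "iota (\<Sum>x\<in>A. f x) = (\<Sum>x\<in>A. iota (f x))"
  by (induction A rule: infinite_finite_induct) (auto simp: i0 iadd)

lemma iota_of_nat: "iota (of_nat k) = of_nat k"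
  by (induction k) (auto simp: i0 i1 iadd)

lemma charh: "of_nat p = (0::'h)"
  using iota_of_nat[of p] charp i0 by simp

lemma iota_pow: "iota (x ^ k) = iota x ^ k"
  by (induction k) (auto simp: i1 imult)

lemma iota_neg: "iota (- x) = - iota x"
  using iadd[of x "-x"] i0 by (simp add: eq_neg_iff_add_eq_0 add.commute)

lemma iota_diff: "iota (x - y) = iota x - iota y"
  using iadd[of x "-y"] iota_neg by simp

lemma p2: "p \<ge> 2" using p prime_ge_2_nat by blast

definition lin :: "(nat \<Rightarrow> 'h) \<Rightarrow> 'k mat \<Rightarrow> nat \<Rightarrow> 'h" where
  "lin t M i = (\<Sum>j<n. iota (M $$ (j,i)) * t j)"

lemma lin_mult:
  assumes "M \<in> carrier_mat n n" "U \<in> carrier_mat n n" "i < n"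
  shows "lin t (M * U) i = (\<Sum>k<n. iota (U $$ (k,i)) * lin t M k)"
proof -
  have "lin t (M * U) i = (\<Sum>j<n. (\<Sum>k<n. iota (M $$ (j,k)) * iota (U $$ (k,i))) * t j)"
    unfolding lin_def using assms by (simp add: mult_idx iota_sum imult del: index_mult_mat(1))
  also have "\<dots> = (\<Sum>j<n. \<Sum>k<n. iota (U $$ (k,i)) * (iota (M $$ (j,k)) * t j))"
    by (intro sum.cong refl) (simp add: sum_distrib_left sum_distrib_right mult_ac)
  also have "\<dots> = (\<Sum>k<n. \<Sum>j<n. iota (U $$ (k,i)) * (iota (M $$ (j,k)) * t j))"
    by (rule sum.swap)
  also have "\<dots> = (\<Sum>k<n. iota (U $$ (k,i)) * lin t M k)"
    by (simp add: lin_def sum_distrib_left)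
  finally show ?thesis .
qed

lemma lin_one: "j < n \<Longrightarrow> lin t (1\<^sub>m n) j = t j"
proof -
  assume j: "j < n"
  have "lin t (1\<^sub>m n) j = (\<Sum>ja<n. if ja = j then t ja else 0)"
    unfolding lin_def using j by (intro sum.cong) (auto simp: i0 i1)
  then show ?thesis using j by simp
qed

lemma lin_pow:
  assumes rel: "\<forall>i<n. t i ^ p = (\<Sum>j<n. iota (B $$ (j,i)) * t j)"
    and B: "B \<in> carrier_mat n n" and M: "M \<in> carrier_mat n n" and i: "i < n"
  shows "lin t M i ^ p = lin t (B * mat_frob p M) i"
proof -
  have "lin t M i ^ p = (\<Sum>j<n. iota (M $$ (j,i)) ^ p * t j ^ p)"
    unfolding lin_def by (simp add: frob_sum[OF p charh] power_mult_distrib)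
  also have "\<dots> = (\<Sum>j<n. \<Sum>k<n. iota (mat_frob p M $$ (j,i)) * (iota (B $$ (k,j)) * t k))"
    using M i by (simp add: rel mat_frob_def iota_pow sum_distrib_left)
  also have "\<dots> = (\<Sum>k<n. \<Sum>j<n. iota (mat_frob p M $$ (j,i)) * (iota (B $$ (k,j)) * t k))"
    by (rule sum.swap)
  also have "\<dots> = lin t (B * mat_frob p M) i"
    unfolding lin_def
  proof (intro sum.cong refl)
    fix k assume k: "k \<in> {..<n}"
    have F: "mat_frob p M \<in> carrier_mat n n" using M by (simp add: mat_frob_def)
    have "iota ((B * mat_frob p M) $$ (k, i)) = (\<Sum>j<n. iota (B $$ (k,j)) * iota (mat_frob p M $$ (j,i)))"
      using k i by (simp add: mult_idx[OF B F] iota_sum imult del: index_mult_mat(1))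
    then show "(\<Sum>j<n. iota (mat_frob p M $$ (j, i)) * (iota (B $$ (k, j)) * t k)) =
          iota ((B * mat_frob p M) $$ (k, i)) * t k"
      by (simp add: sum_distrib_left sum_distrib_right mult_ac)
  qed
  finally show ?thesis .
qed


definition Mset :: "'k set \<Rightarrow> (nat \<Rightarrow> 'h) \<Rightarrow> 'h set" where
  "Mset Q s = {x. \<exists>c. (\<forall>a\<in>exps p n. c a \<in> Q) \<and> x = (\<Sum>a\<in>exps p n. iota (c a) * monom_t n s a)}"

definition good :: "'k set \<Rightarrow> 'k mat \<Rightarrow> (nat \<Rightarrow> 'h) \<Rightarrow> bool" where
  "good Q A s \<longleftrightarrow> subr Q \<and> (\<forall>i<n. \<forall>j<n. A $$ (j,i) \<in> Q) \<and>
     (\<forall>i<n. s i ^ p = (\<Sum>j<n. iota (A $$ (j,i)) * s j))"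

lemma good_Q: "good Q A s \<Longrightarrow> subr Q" by (simp add: good_def)
lemma good_AQ: "good Q A s \<Longrightarrow> i < n \<Longrightarrow> j < n \<Longrightarrow> A $$ (j,i) \<in> Q" by (simp add: good_def)
lemma good_rel: "good Q A s \<Longrightarrow> i < n \<Longrightarrow> s i ^ p = (\<Sum>j<n. iota (A $$ (j,i)) * s j)" by (simp add: good_def)

lemma Mset_intro:
  assumes "\<forall>a\<in>exps p n. c a \<in> Q" "x = (\<Sum>a\<in>exps p n. iota (c a) * monom_t n s a)"
  shows "x \<in> Mset Q s"
  using assms unfolding Mset_def by blast

lemma Mset_add:
  assumes Q: "subr Q" and x: "x \<in> Mset Q s" and y: "y \<in> Mset Q s"
  shows "x + y \<in> Mset Q s"
proof -
  obtain c where c: "\<forall>a\<in>exps p n. c a \<in> Q" "x = (\<Sum>a\<in>exps p n. iota (c a) * monom_t n s a)"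
    using x unfolding Mset_def by blast
  obtain d where d: "\<forall>a\<in>exps p n. d a \<in> Q" "y = (\<Sum>a\<in>exps p n. iota (d a) * monom_t n s a)"
    using y unfolding Mset_def by blast
  have "x + y = (\<Sum>a\<in>exps p n. iota (c a + d a) * monom_t n s a)"
    using c d by (simp add: iadd distrib_right sum.distrib)
  moreover have "\<forall>a\<in>exps p n. c a + d a \<in> Q" using c d Q by (simp add: subr_def)
  ultimately show ?thesis by (intro Mset_intro[of "\<lambda>a. c a + d a"])
qed

lemma Mset_scale:
  assumes Q: "subr Q" and x: "x \<in> Mset Q s" and q: "q \<in> Q"
  shows "iota q * x \<in> Mset Q s"
proof -
  obtain c where c: "\<forall>a\<in>exps p n. c a \<in> Q" "x = (\<Sum>a\<in>exps p n. iota (c a) * monom_t n s a)"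
    using x unfolding Mset_def by blast
  have "iota q * x = (\<Sum>a\<in>exps p n. iota (q * c a) * monom_t n s a)"
    using c by (simp add: imult sum_distrib_left mult.assoc)
  moreover have "\<forall>a\<in>exps p n. q * c a \<in> Q" using c q Q by (simp add: subr_def)
  ultimately show ?thesis by (intro Mset_intro[of "\<lambda>a. q * c a"])
qed

lemma Mset_zero:
  assumes Q: "subr Q" shows "0 \<in> Mset Q s"
proof -
  have "(0::'h) = (\<Sum>a\<in>exps p n. iota 0 * monom_t n s a)" by (simp add: i0)
  moreover have "\<forall>a\<in>exps p n. (0::'k) \<in> Q" using Q by (simp add: subr_def)
  ultimately show ?thesis by (intro Mset_intro[of "\<lambda>a. 0"])
qed

lemma Mset_sum:
  assumes Q: "subr Q" and A: "finite A" and f: "\<And>x. x \<in> A \<Longrightarrow> f x \<in> Mset Q s"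
  shows "sum f A \<in> Mset Q s"
  using A f by (induction A rule: finite_induct) (auto intro: Mset_add[OF Q] Mset_zero[OF Q])

lemma Mset_monom_exps:
  assumes Q: "subr Q" and b: "b \<in> exps p n"
  shows "monom_t n s b \<in> Mset Q s"
proof -
  have "monom_t n s b = (\<Sum>a\<in>exps p n. iota (if a = b then 1 else 0) * monom_t n s a)"
  proof -
    have "(\<Sum>a\<in>exps p n. iota (if a = b then 1 else 0) * monom_t n s a)
        = (\<Sum>a\<in>exps p n. if a = b then monom_t n s a else 0)"
      by (intro sum.cong) (auto simp: i0 i1)
    also have "\<dots> = monom_t n s b" using b finite_exps by simp
    finally show ?thesis by simp
  qed
  moreover have "\<forall>a\<in>exps p n. (if a = b then 1 else 0::'k) \<in> Q" using Q by (simp add: subr_def)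
  ultimately show ?thesis by (intro Mset_intro[of "\<lambda>a. if a = b then 1 else 0"])
qed

lemma Mset_monom:
  assumes G: "good Q A s"
  shows "monom_t n s b \<in> Mset Q s"
proof -
  note Q = good_Q[OF G] and AQ = good_AQ[OF G] and rel = good_rel[OF G]
  have "\<forall>b. (\<Sum>i<n. b i) = d \<longrightarrow> monom_t n s b \<in> Mset Q s" for d
  proof (induction d rule: less_induct)
    case (less d)
    show ?case
    proof (intro allI impI)
      fix b :: "nat \<Rightarrow> nat" assume bd: "(\<Sum>i<n. b i) = d"
      show "monom_t n s b \<in> Mset Q s"
      proof (cases "\<exists>i<n. p \<le> b i")
        case True
        then obtain i where i: "i < n" "p \<le> b i" by blast
        define b' where "b' = b(i := b i - p)"
        have "monom_t n s b = s i ^ b i * (\<Prod>k\<in>{..<n}-{i}. s k ^ b k)"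
          by (rule monom_split[OF i(1)])
        also have "s i ^ b i = s i ^ p * s i ^ (b i - p)"
          using i(2) by (simp flip: power_add)
        also have "(\<Prod>k\<in>{..<n}-{i}. s k ^ b k) = (\<Prod>k\<in>{..<n}-{i}. s k ^ b' k)"
          unfolding b'_def by (rule prod.cong) auto
        finally have "monom_t n s b = s i ^ p * monom_t n s b'"
          using monom_split[OF i(1), of s b'] by (simp add: b'_def mult.assoc)
        also have "\<dots> = (\<Sum>j<n. iota (A $$ (j,i)) * monom_t n s (b'(j := b' j + 1)))"
          unfolding rel[OF i(1)] sum_distrib_right
          by (intro sum.cong refl) (simp add: monom_Suc)
        finally have eq: "monom_t n s b = (\<Sum>j<n. iota (A $$ (j,i)) * monom_t n s (b'(j := b' j + 1)))" .
        have sb': "(\<Sum>k<n. b' k) + p = d"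
          using sum_upd[OF i(1), of b "b i - p"] i(2) bd by (simp add: b'_def)
        show ?thesis unfolding eq
        proof (rule Mset_sum[OF Q])
          show "finite {..<n}" by simp
        next
          fix j assume "j \<in> {..<n}"
          then have j: "j < n" by simp
          have "(\<Sum>k<n. (b'(j := b' j + 1)) k) + b' j = (\<Sum>k<n. b' k) + (b' j + 1)"
            by (rule sum_upd[OF j])
          then have "(\<Sum>k<n. (b'(j := b' j + 1)) k) < d" using sb' p2 by simp
          then have "monom_t n s (b'(j := b' j + 1)) \<in> Mset Q s" using less by blast
          then show "iota (A $$ (j,i)) * monom_t n s (b'(j := b' j + 1)) \<in> Mset Q s"
            using Mset_scale[OF Q] AQ[OF i(1) j] by blast
        qed
      next
        case False
        define b0 where "b0 = (\<lambda>i. if i < n then b i else 0)"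
        have "b0 \<in> exps p n" using False unfolding b0_def exps_def by auto
        moreover have "monom_t n s b = monom_t n s b0"
          unfolding monom_t_def b0_def by (rule prod.cong) auto
        ultimately show ?thesis using Mset_monom_exps[OF Q] by simp
      qed
    qed
  qed
  then show ?thesis by blast
qed

lemma Mset_mult:
  assumes G: "good Q A s"
    and x: "x \<in> Mset Q s" and y: "y \<in> Mset Q s"
  shows "x * y \<in> Mset Q s"
proof -
  note Q = good_Q[OF G] and AQ = good_AQ[OF G] and rel = good_rel[OF G]
  obtain c where c: "\<forall>a\<in>exps p n. c a \<in> Q" "x = (\<Sum>a\<in>exps p n. iota (c a) * monom_t n s a)"
    using x unfolding Mset_def by blast
  obtain d where d: "\<forall>a\<in>exps p n. d a \<in> Q" "y = (\<Sum>a\<in>exps p n. iota (d a) * monom_t n s a)"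
    using y unfolding Mset_def by blast
  have "x * y = (\<Sum>a\<in>exps p n. \<Sum>b\<in>exps p n. iota (c a * d b) * monom_t n s (\<lambda>i. a i + b i))"
    unfolding c(2) d(2) sum_product by (simp add: imult monom_add mult_ac)
  also have "\<dots> \<in> Mset Q s"
  proof (rule Mset_sum[OF Q finite_exps])
    fix a assume a: "a \<in> exps p n"
    show "(\<Sum>b\<in>exps p n. iota (c a * d b) * monom_t n s (\<lambda>i. a i + b i)) \<in> Mset Q s"
    proof (rule Mset_sum[OF Q finite_exps])
      fix b assume b: "b \<in> exps p n"
      have "c a * d b \<in> Q" using c(1) d(1) a b Q by (simp add: subr_def)
      moreover have "monom_t n s (\<lambda>i. a i + b i) \<in> Mset Q s" by (rule Mset_monom[OF G])
      ultimately show "iota (c a * d b) * monom_t n s (\<lambda>i. a i + b i) \<in> Mset Q s"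
        using Mset_scale[OF Q] by blast
    qed
  qed
  finally show ?thesis .
qed


lemma delta_sum:
  assumes b: "b \<in> exps p n"
  shows "(\<Sum>a\<in>exps p n. iota (if a = b then 1 else 0) * f a) = f b"
proof -
  have "(\<Sum>a\<in>exps p n. iota (if a = b then 1 else 0) * f a)
      = (\<Sum>a\<in>exps p n. if a = b then f a else 0)"
    by (intro sum.cong) (auto simp: i0 i1)
  also have "\<dots> = f b" using b finite_exps by simp
  finally show ?thesis .
qed

lemma Mset_one:
  assumes G: "good Q A s"
  shows "1 \<in> Mset Q s"
  using Mset_monom[OF G, of "\<lambda>_. 0"] by (simp add: monom_zero)

lemma Mset_gen:
  assumes G: "good Q A s"
    and i: "i < n"
  shows "s i \<in> Mset Q s"
  using Mset_monom[OF G, of "(\<lambda>_. 0)(i := Suc 0)"] monom_Suc[OF i, of s "\<lambda>_. 0"]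
  by (simp add: monom_zero)

lemma Mset_prod:
  assumes G: "good Q A s"
    and I: "finite I" and f: "\<And>i. i \<in> I \<Longrightarrow> f i \<in> Mset Q s"
  shows "prod f I \<in> Mset Q s"
  using I f
proof (induction I rule: finite_induct)
  case empty
  then show ?case using Mset_one[OF G] by simp
next
  case (insert x F)
  have "f x \<in> Mset Q s" "prod f F \<in> Mset Q s" using insert by auto
  then have "f x * prod f F \<in> Mset Q s" by (rule Mset_mult[OF G])
  then show ?case using insert(1,2) by simp
qed

lemma Mset_power:
  assumes G: "good Q A s"
    and x: "x \<in> Mset Q s"
  shows "x ^ k \<in> Mset Q s"
proof (induction k)
  case 0
  then show ?case using Mset_one[OF G] by simp
next
  case (Suc k)
  then have "x * x ^ k \<in> Mset Q s" by (rule Mset_mult[OF G x])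
  then show ?case by simp
qed

lemma solve_a0:
  fixes f :: "(nat \<Rightarrow> nat) \<Rightarrow> 'h"
  assumes ne: "c a0 \<noteq> 0" and fE: "finite E" and a0: "a0 \<in> E"
    and c0: "(\<Sum>a\<in>E. iota (c a) * f a) = 0"
  shows "f a0 = - (iota (inverse (c a0)) * (\<Sum>x\<in>E - {a0}. iota (c x) * f x))"
proof -
  have r: "(\<Sum>a\<in>E. iota (c a) * f a) = iota (c a0) * f a0 + (\<Sum>x\<in>E - {a0}. iota (c x) * f x)"
    by (rule sum.remove[OF fE a0])
  have h: "iota (c a0) * f a0 + (\<Sum>x\<in>E - {a0}. iota (c x) * f x) = 0"
    using c0 unfolding r .
  let ?m = "f a0" and ?S = "(\<Sum>x\<in>E - {a0}. iota (c x) * f x)"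
  have e: "iota (inverse (c a0)) * (iota (c a0) * ?m) = ?m"
  proof -
    have "iota (inverse (c a0)) * (iota (c a0) * ?m) = iota (inverse (c a0) * c a0) * ?m"
      by (simp add: imult mult.assoc)
    also have "\<dots> = ?m" using ne by (simp add: i1)
    finally show ?thesis .
  qed
  have "iota (inverse (c a0)) * (iota (c a0) * ?m + ?S) = 0" using h by simp
  then have "iota (inverse (c a0)) * (iota (c a0) * ?m) + iota (inverse (c a0)) * ?S = 0"
    by (simp only: distrib_left)
  then have "?m + iota (inverse (c a0)) * ?S = 0" by (simp only: e)
  then show ?thesis by (simp add: eq_neg_iff_add_eq_0)
qed

lemma indep_s:
  assumes tb: "\<forall>c. (\<Sum>a\<in>exps p n. iota (c a) * monom_t n t a) = 0 \<longrightarrow> (\<forall>a\<in>exps p n. c a = 0)"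
    and GU: "good UNIV A s"
    and tin: "\<forall>j<n. t j \<in> Mset UNIV s"
    and c0: "(\<Sum>a\<in>exps p n. iota (c a) * monom_t n s a) = 0"
    and a0: "a0 \<in> exps p n"
  shows "c a0 = 0"
proof (rule ccontr)
  assume ne: "c a0 \<noteq> 0"
  let ?E = "exps p n"
  let ?T = "monom_t n t ` ?E"
  let ?S' = "monom_t n s ` (?E - {a0})"
  have inj: "inj_on (monom_t n t) ?E"
  proof (rule inj_onI, rule ccontr)
    fix a b assume a: "a \<in> ?E" and b: "b \<in> ?E" and eq: "monom_t n t a = monom_t n t b" and ab: "a \<noteq> b"
    define d where "d = (\<lambda>x. (if x = a then 1 else 0) - (if x = b then 1 else (0::'k)))"
    have "(\<Sum>x\<in>?E. iota (d x) * monom_t n t x)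
        = (\<Sum>x\<in>?E. iota (if x = a then 1 else 0) * monom_t n t x) - (\<Sum>x\<in>?E. iota (if x = b then 1 else 0) * monom_t n t x)"
      unfolding d_def by (simp add: iota_diff left_diff_distrib sum_subtractf)
    also have "\<dots> = 0" using delta_sum[OF a] delta_sum[OF b] eq by simp
    finally have "d a = 0" using tb a by blast
    then show False using ab by (simp add: d_def)
  qed
  interpret vs: vector_space "\<lambda>c h. iota c * h"
    by unfold_locales (auto simp: iadd imult i1 algebra_simps)
  have indT: "vs.independent ?T"
  proof
    assume "vs.dependent ?T"
    then obtain u where u: "\<exists>v\<in>?T. u v \<noteq> 0" "(\<Sum>v\<in>?T. iota (u v) * v) = 0"
      using vs.dependent_finite[of ?T] finite_exps by auto
    have "(\<Sum>a\<in>?E. iota (u (monom_t n t a)) * monom_t n t a) = 0"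
      using u(2) by (simp add: sum.reindex[OF inj])
    then have "\<forall>a\<in>?E. u (monom_t n t a) = 0" using tb[rule_format, of "\<lambda>a. u (monom_t n t a)"] by blast
    then show False using u(1) by blast
  qed
  have cardT: "card ?T = card ?E" by (rule card_image[OF inj])
  have fE: "finite ?E" by (rule finite_exps)
  have mono_span: "monom_t n s a \<in> vs.span ?S'" if a: "a \<in> ?E" for a
  proof (cases "a = a0")
    case False
    then show ?thesis using a by (intro vs.span_base) auto
  next
    case True
    have "monom_t n s a0 = - (iota (inverse (c a0)) * (\<Sum>x\<in>?E - {a0}. iota (c x) * monom_t n s x))"
      by (rule solve_a0[OF ne fE a0 c0])
    also have "\<dots> \<in> vs.span ?S'"
      by (intro vs.span_neg vs.span_scale vs.span_sum vs.span_base) auto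
    finally show ?thesis using True by simp
  qed
  have "?T \<subseteq> vs.span ?S'"
  proof
    fix x assume "x \<in> ?T"
    then obtain a where a: "a \<in> ?E" "x = monom_t n t a" by blast
    have "x \<in> Mset UNIV s"
      unfolding a(2) monom_t_def
      using tin by (intro Mset_prod[OF GU] Mset_power[OF GU]) auto
    then obtain d where "x = (\<Sum>a\<in>?E. iota (d a) * monom_t n s a)" unfolding Mset_def by blast
    also have "\<dots> \<in> vs.span ?S'"
      by (intro vs.span_sum vs.span_scale mono_span)
    finally show "x \<in> vs.span ?S'" .
  qed
  then have "card ?T \<le> card ?S'"
    using vs.independent_span_bound[OF _ indT] fE by auto
  also have "\<dots> \<le> card (?E - {a0})" using fE by (intro card_image_le) auto
  also have "\<dots> < card ?E" using fE a0 by (rule card_Diff1_less)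
  finally show False using cardT by simp
qed


lemma H_order_lin: "H_order R iota n t M = subalg_gen R iota {lin t M i | i. i < n}"
  by (simp add: H_order_def lin_def)

lemma good_lin:
  assumes Q: "subr Q"
    and rel: "\<forall>i<n. t i ^ p = (\<Sum>j<n. iota (B $$ (j,i)) * t j)"
    and B: "B \<in> carrier_mat n n"
    and M: "M \<in> GL_over n S"
    and AQ: "mat_inv n M * B * mat_frob p M \<in> mat_over n Q"
  shows "good Q (mat_inv n M * B * mat_frob p M) (lin t M)"
proof -
  let ?A = "mat_inv n M * B * mat_frob p M"
  note I = mat_inv_props[OF M]
  have Mc: "M \<in> carrier_mat n n" by (rule GL_carrier[OF M])
  have F: "mat_frob p M \<in> carrier_mat n n" using Mc by (simp add: mat_frob_def)
  have Ac: "?A \<in> carrier_mat n n" using I(1) B F by auto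
  have MA: "M * ?A = B * mat_frob p M"
  proof -
    have "M * ?A = M * (mat_inv n M * (B * mat_frob p M))" using I(1) B F by simp
    also have "\<dots> = (M * mat_inv n M) * (B * mat_frob p M)" 
      by (rule assoc_mult_mat[symmetric, OF Mc I(1) mult_carrier_mat[OF B F]])
    also have "\<dots> = B * mat_frob p M" using I(2) B F by simp
    finally show ?thesis .
  qed
  have "lin t M i ^ p = (\<Sum>j<n. iota (?A $$ (j,i)) * lin t M j)" if i: "i < n" for i
  proof -
    have "lin t M i ^ p = lin t (B * mat_frob p M) i" by (rule lin_pow[OF rel B Mc i])
    also have "\<dots> = lin t (M * ?A) i" using MA by simp
    also have "\<dots> = (\<Sum>j<n. iota (?A $$ (j,i)) * lin t M j)" by (rule lin_mult[OF Mc Ac i])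
    finally show ?thesis .
  qed
  then show ?thesis using Q AQ unfolding good_def mat_over_def by auto
qed

lemma t_in_Mset:
  assumes M: "M \<in> GL_over n S" and G: "good UNIV A (lin t M)" and j: "j < n"
  shows "t j \<in> Mset UNIV (lin t M)"
proof -
  note I = mat_inv_props[OF M]
  have Mc: "M \<in> carrier_mat n n" by (rule GL_carrier[OF M])
  have "t j = lin t (1\<^sub>m n) j" using lin_one[OF j] by simp
  also have "\<dots> = lin t (M * mat_inv n M) j" using I(2) by simp
  also have "\<dots> = (\<Sum>k<n. iota (mat_inv n M $$ (k,j)) * lin t M k)" by (rule lin_mult[OF Mc I(1) j])
  also have "\<dots> \<in> Mset UNIV (lin t M)"
    by (intro Mset_sum[OF subr_UNIV] Mset_scale[OF subr_UNIV] Mset_gen[OF G]) auto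
  finally show ?thesis .
qed

lemma H_sub_Mset:
  assumes G: "good Q A (lin t M)" and Q0: "subr Q"
  shows "H_order Q iota n t M \<subseteq> Mset Q (lin t M)"
proof
  fix x assume "x \<in> H_order Q iota n t M"
  then have "x \<in> subalg_gen Q iota {lin t M i | i. i < n}" by (simp add: H_order_lin)
  then show "x \<in> Mset Q (lin t M)"
  proof induction
    case (scal r)
    have "iota r * 1 \<in> Mset Q (lin t M)"
      by (rule Mset_scale[OF Q0 Mset_one[OF G] scal])
    then show ?case by simp
  next
    case (gen g)
    then show ?case using Mset_gen[OF G] by auto
  next
    case (add x y)
    then show ?case using Mset_add[OF Q0] by blast
  next
    case (mult x y)
    then show ?case using Mset_mult[OF G] by blast
  qed
qed

definition ev :: "nat \<Rightarrow> nat \<Rightarrow> nat" where "ev k = (\<lambda>_. 0)(k := Suc 0)"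

lemma ev_exps: "k < n \<Longrightarrow> ev k \<in> exps p n"
  using p2 by (auto simp: ev_def exps_def)

lemma ev_inj: "ev k = ev k' \<Longrightarrow> k = k'"
  unfolding ev_def by (metis fun_upd_same fun_upd_other zero_neq_one One_nat_def)

lemma monom_ev: "k < n \<Longrightarrow> monom_t n s (ev k) = s k"
  using monom_Suc[of k n s "\<lambda>_. 0"] by (simp add: ev_def monom_zero)

lemma key:
  assumes tb: "\<forall>c. (\<Sum>a\<in>exps p n. iota (c a) * monom_t n t a) = 0 \<longrightarrow> (\<forall>a\<in>exps p n. c a = 0)"
    and rel: "\<forall>i<n. t i ^ p = (\<Sum>j<n. iota (B $$ (j,i)) * t j)"
    and B: "B \<in> carrier_mat n n"
    and R: "subr R"
    and M: "M \<in> GL_over n UNIV" and M': "M' \<in> GL_over n UNIV"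
    and AR: "mat_inv n M * B * mat_frob p M \<in> mat_over n R"
    and gens: "\<And>i. i < n \<Longrightarrow> lin t M' i \<in> H_order R iota n t M"
  shows "mat_inv n M * M' \<in> mat_over n R"
proof -
  let ?A = "mat_inv n M * B * mat_frob p M"
  let ?s = "lin t M"
  let ?U = "mat_inv n M * M'"
  let ?E = "exps p n"
  note I = mat_inv_props[OF M]
  have Mc: "M \<in> carrier_mat n n" by (rule GL_carrier[OF M])
  have M'c: "M' \<in> carrier_mat n n" by (rule GL_carrier[OF M'])
  have Uc: "?U \<in> carrier_mat n n" using I(1) M'c by simp
  have GR: "good R ?A ?s" by (rule good_lin[OF R rel B M AR])
  have F: "mat_frob p M \<in> carrier_mat n n" using Mc by (simp add: mat_frob_def)
  have Ac: "?A \<in> carrier_mat n n"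
    by (intro mult_carrier_mat[OF mult_carrier_mat[OF I(1) B] F])
  have AU: "?A \<in> mat_over n UNIV" using Ac by (simp add: mat_over_def)
  have GU: "good UNIV ?A ?s" using good_lin[OF subr_UNIV rel B M AU] .
  have tin: "\<forall>j<n. t j \<in> Mset UNIV ?s" using t_in_Mset[OF M GU] by blast
  have MU: "M * ?U = M'"
  proof -
    have "M * ?U = (M * mat_inv n M) * M'" 
      by (rule assoc_mult_mat[symmetric, OF Mc I(1) M'c])
    also have "\<dots> = M'" using I(2) M'c by simp
    finally show ?thesis .
  qed
  have "?U $$ (k,i) \<in> R" if k: "k < n" and i: "i < n" for k i
  proof -
    have "lin t M' i = lin t (M * ?U) i" using MU by simp
    also have "\<dots> = (\<Sum>k<n. iota (?U $$ (k,i)) * ?s k)" by (rule lin_mult[OF Mc Uc i])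
    finally have eq1: "lin t M' i = (\<Sum>k<n. iota (?U $$ (k,i)) * ?s k)" .
    have "lin t M' i \<in> Mset R ?s" using H_sub_Mset[OF GR R] gens[OF i] by blast
    then obtain c where c: "\<forall>a\<in>?E. c a \<in> R" "lin t M' i = (\<Sum>a\<in>?E. iota (c a) * monom_t n ?s a)"
      unfolding Mset_def by blast
    define d where "d a = (\<Sum>k<n. if a = ev k then ?U $$ (k,i) else 0)" for a
    have "(\<Sum>a\<in>?E. iota (d a) * monom_t n ?s a)
        = (\<Sum>a\<in>?E. \<Sum>k<n. iota (if a = ev k then ?U $$ (k,i) else 0) * monom_t n ?s a)"
      unfolding d_def by (simp add: iota_sum sum_distrib_right)
    also have "\<dots> = (\<Sum>k<n. \<Sum>a\<in>?E. iota (if a = ev k then ?U $$ (k,i) else 0) * monom_t n ?s a)"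
      by (rule sum.swap)
    also have "\<dots> = (\<Sum>k<n. iota (?U $$ (k,i)) * ?s k)"
    proof (rule sum.cong[OF refl])
      fix k assume "k \<in> {..<n}"
      then have k: "k < n" by simp
      have "(\<Sum>a\<in>?E. iota (if a = ev k then ?U $$ (k,i) else 0) * monom_t n ?s a)
          = (\<Sum>a\<in>?E. if a = ev k then iota (?U $$ (k,i)) * monom_t n ?s a else 0)"
        by (intro sum.cong refl) (simp add: i0)
      also have "\<dots> = iota (?U $$ (k,i)) * monom_t n ?s (ev k)"
        using ev_exps[OF k] finite_exps by simp
      also have "\<dots> = iota (?U $$ (k,i)) * ?s k" by (simp only: monom_ev[OF k])
      finally show "(\<Sum>a\<in>?E. iota (if a = ev k then ?U $$ (k,i) else 0) * monom_t n ?s a) = iota (?U $$ (k,i)) * ?s k" .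
    qed
    finally have eq2: "(\<Sum>a\<in>?E. iota (d a) * monom_t n ?s a) = lin t M' i" using eq1 by simp
    have "(\<Sum>a\<in>?E. iota (c a - d a) * monom_t n ?s a) = 0"
      using c(2) eq2 by (simp add: iota_diff left_diff_distrib sum_subtractf)
    then have "c (ev k) - d (ev k) = 0"
      using indep_s[OF tb GU tin _ ev_exps[OF k], of "\<lambda>a. c a - d a"] by blast
    moreover have "d (ev k) = ?U $$ (k,i)"
    proof -
      have "d (ev k) = (\<Sum>k'<n. if k' = k then ?U $$ (k',i) else 0)"
        unfolding d_def by (intro sum.cong refl) (auto dest: ev_inj)
      also have "\<dots> = ?U $$ (k,i)" using k by simp
      finally show ?thesis .
    qed
    ultimately show ?thesis using c(1) ev_exps[OF k] by auto
  qed
  then show ?thesis using Uc by (auto simp: mat_over_def)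
qed


lemma H_sub:
  assumes R: "subr R" and Mc: "M \<in> carrier_mat n n" and U: "U \<in> mat_over n R"
  shows "H_order R iota n t (M * U) \<subseteq> H_order R iota n t M"
  unfolding H_order_lin
proof (rule subalg_mono, rule subsetI)
  have Uc: "U \<in> carrier_mat n n" using U by (simp add: mat_over_def)
  fix x assume "x \<in> {lin t (M * U) i | i. i < n}"
  then obtain i where i: "i < n" and x: "x = lin t (M * U) i" by blast
  have "x = (\<Sum>k<n. iota (U $$ (k,i)) * lin t M k)" unfolding x by (rule lin_mult[OF Mc Uc i])
  also have "\<dots> \<in> subalg_gen R iota {lin t M i | i. i < n}"
  proof (rule subalg_sum)
    show "0 \<in> R" using R by (simp add: subr_def)
    show "iota 0 = 0" by (rule i0)
    fix k assume "k \<in> {..<n}"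
    then have k: "k < n" by simp
    have "iota (U $$ (k,i)) \<in> subalg_gen R iota {lin t M i | i. i < n}"
      using U k i by (intro subalg_gen.scal) (auto simp: mat_over_def)
    moreover have "lin t M k \<in> subalg_gen R iota {lin t M i | i. i < n}"
      using k by (intro subalg_gen.gen) auto
    ultimately show "iota (U $$ (k,i)) * lin t M k \<in> subalg_gen R iota {lin t M i | i. i < n}"
      by (rule subalg_gen.mult)
  qed simp
  finally show "x \<in> subalg_gen R iota {lin t M i | i. i < n}" .
qed

lemma gen_in_H: "i < n \<Longrightarrow> lin t M i \<in> H_order R iota n t M"
  unfolding H_order_lin by (intro subalg_gen.gen) auto

end

lemma dvr_subr: "is_dvr_with_frac_field R \<Longrightarrow> subr R"
  unfolding is_dvr_with_frac_field_def subr_def by blast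

theorem corollary4p3:
  fixes R :: "'k::field set" and p n :: nat
    and iota :: "'k \<Rightarrow> 'h::comm_ring_1" and t :: "nat \<Rightarrow> 'h"
    and B \<Theta> \<Theta>' :: "'k mat"
  assumes "is_dvr_with_frac_field R"
    and "prime p" and "of_nat p = (0::'k)"
    and "prim_gen_algebra p n iota t B"
    and "B \<in> mat_over n R"
    and "\<Theta> \<in> GL_over n (UNIV :: 'k set)"
    and "mat_inv n \<Theta> * B * mat_frob p \<Theta> \<in> mat_over n R"
    and "\<Theta>' \<in> GL_over n (UNIV :: 'k set)"
  shows "(mat_inv n \<Theta>' * B * mat_frob p \<Theta>' \<in> mat_over n R \<and>
           H_order R iota n t \<Theta>' = H_order R iota n t \<Theta>)
         \<longleftrightarrow> (\<exists>U \<in> GL_over n R. \<Theta>' = \<Theta> * U)"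
proof -
  note pg = assms(4)[unfolded prim_gen_algebra_def]
  interpret S: setting p n iota
    using assms(2,3) pg by unfold_locales auto
  have R: "subr R" by (rule dvr_subr[OF assms(1)])
  have tb: "\<forall>c. (\<Sum>a\<in>exps p n. iota (c a) * monom_t n t a) = 0 \<longrightarrow> (\<forall>a\<in>exps p n. c a = 0)"
    using pg by blast
  have rel: "\<forall>i<n. t i ^ p = (\<Sum>j<n. iota (B $$ (j,i)) * t j)" using pg by blast
  have Bc: "B \<in> carrier_mat n n" using assms(5) by (simp add: mat_over_def)
  have T: "\<Theta> \<in> GL_over n UNIV" and T': "\<Theta>' \<in> GL_over n UNIV" using assms(6,8) .
  have Tc: "\<Theta> \<in> carrier_mat n n" and T'c: "\<Theta>' \<in> carrier_mat n n"
    using GL_carrier[OF T] GL_carrier[OF T'] .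
  note I = mat_inv_props[OF T] and I' = mat_inv_props[OF T']
  show ?thesis
  proof
    assume a: "mat_inv n \<Theta>' * B * mat_frob p \<Theta>' \<in> mat_over n R \<and>
           H_order R iota n t \<Theta>' = H_order R iota n t \<Theta>"
    let ?U = "mat_inv n \<Theta> * \<Theta>'" and ?V = "mat_inv n \<Theta>' * \<Theta>"
    have U: "?U \<in> mat_over n R"
    proof (rule S.key[OF tb rel Bc R T T' assms(7)])
      fix i assume "i < n"
      then show "S.lin t \<Theta>' i \<in> H_order R iota n t \<Theta>" using S.gen_in_H a by blast
    qed
    have V: "?V \<in> mat_over n R"
    proof (rule S.key[OF tb rel Bc R T' T])
      show "mat_inv n \<Theta>' * B * mat_frob p \<Theta>' \<in> mat_over n R" using a by blast
      fix i assume "i < n"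
      then show "S.lin t \<Theta> i \<in> H_order R iota n t \<Theta>'" using S.gen_in_H a by blast
    qed
    have UV: "?U * ?V = 1\<^sub>m n"
    proof -
      have "?U * ?V = mat_inv n \<Theta> * (\<Theta>' * (mat_inv n \<Theta>' * \<Theta>))"
        by (rule assoc_mult_mat[OF I(1) T'c mult_carrier_mat[OF I'(1) Tc]])
      also have "\<Theta>' * (mat_inv n \<Theta>' * \<Theta>) = (\<Theta>' * mat_inv n \<Theta>') * \<Theta>"
        by (rule assoc_mult_mat[symmetric, OF T'c I'(1) Tc])
      also have "\<dots> = \<Theta>" using I'(2) Tc by simp
      also have "mat_inv n \<Theta> * \<Theta> = 1\<^sub>m n" by (rule I(3))
      finally show ?thesis .
    qed
    have VU: "?V * ?U = 1\<^sub>m n"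
    proof -
      have "?V * ?U = mat_inv n \<Theta>' * (\<Theta> * (mat_inv n \<Theta> * \<Theta>'))"
        by (rule assoc_mult_mat[OF I'(1) Tc mult_carrier_mat[OF I(1) T'c]])
      also have "\<Theta> * (mat_inv n \<Theta> * \<Theta>') = (\<Theta> * mat_inv n \<Theta>) * \<Theta>'"
        by (rule assoc_mult_mat[symmetric, OF Tc I(1) T'c])
      also have "\<dots> = \<Theta>'" using I(2) T'c by simp
      also have "mat_inv n \<Theta>' * \<Theta>' = 1\<^sub>m n" by (rule I'(3))
      finally show ?thesis .
    qed
    have "?U \<in> GL_over n R" unfolding GL_over_def using U V UV VU by blast
    moreover have "\<Theta>' = \<Theta> * ?U"
    proof -
      have "\<Theta> * ?U = (\<Theta> * mat_inv n \<Theta>) * \<Theta>'"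
        by (rule assoc_mult_mat[symmetric, OF Tc I(1) T'c])
      also have "\<dots> = \<Theta>'" using I(2) T'c by simp
      finally show ?thesis by simp
    qed
    ultimately show "\<exists>U \<in> GL_over n R. \<Theta>' = \<Theta> * U" by blast
  next
    assume "\<exists>U \<in> GL_over n R. \<Theta>' = \<Theta> * U"
    then obtain U where U: "U \<in> GL_over n R" and TU: "\<Theta>' = \<Theta> * U" by blast
    obtain N where N: "N \<in> mat_over n R" and UN: "U * N = 1\<^sub>m n" and NU: "N * U = 1\<^sub>m n"
      using U unfolding GL_over_def by blast
    have UR: "U \<in> mat_over n R" using U unfolding GL_over_def by blast
    have Uc: "U \<in> carrier_mat n n" and Nc: "N \<in> carrier_mat n n"
      using UR N by (auto simp: mat_over_def)
    have FT: "mat_frob p \<Theta> \<in> carrier_mat n n" and FU: "mat_frob p U \<in> carrier_mat n n"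
      using Tc Uc by (auto simp: mat_frob_def)
    have inv': "mat_inv n \<Theta>' = N * mat_inv n \<Theta>"
    proof (rule mat_inv_unique[OF T' mult_carrier_mat[OF Nc I(1)]])
      have "\<Theta>' * (N * mat_inv n \<Theta>) = \<Theta> * (U * (N * mat_inv n \<Theta>))"
        unfolding TU by (rule assoc_mult_mat[OF Tc Uc mult_carrier_mat[OF Nc I(1)]])
      also have "U * (N * mat_inv n \<Theta>) = (U * N) * mat_inv n \<Theta>"
        by (rule assoc_mult_mat[symmetric, OF Uc Nc I(1)])
      also have "\<dots> = mat_inv n \<Theta>" using UN I(1) by simp
      also have "\<Theta> * mat_inv n \<Theta> = 1\<^sub>m n" by (rule I(2))
      finally show "\<Theta>' * (N * mat_inv n \<Theta>) = 1\<^sub>m n" .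
    qed
    have fr: "mat_frob p \<Theta>' = mat_frob p \<Theta> * mat_frob p U"
      unfolding TU by (rule frob_mult[OF assms(2,3) Tc Uc])
    let ?A = "mat_inv n \<Theta> * B * mat_frob p \<Theta>"
    have NI: "N * mat_inv n \<Theta> \<in> carrier_mat n n" using Nc I(1) by (rule mult_carrier_mat)
    have "mat_inv n \<Theta>' * B * mat_frob p \<Theta>' = ((N * mat_inv n \<Theta>) * B) * (mat_frob p \<Theta> * mat_frob p U)"
      unfolding inv' fr ..
    also have "\<dots> = (((N * mat_inv n \<Theta>) * B) * mat_frob p \<Theta>) * mat_frob p U"
      by (rule assoc_mult_mat[symmetric, OF mult_carrier_mat[OF NI Bc] FT FU])
    also have "(N * mat_inv n \<Theta>) * B = N * (mat_inv n \<Theta> * B)"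
      by (rule assoc_mult_mat[OF Nc I(1) Bc])
    also have "(N * (mat_inv n \<Theta> * B)) * mat_frob p \<Theta> = N * ?A"
      by (rule assoc_mult_mat[OF Nc mult_carrier_mat[OF I(1) Bc] FT])
    finally have eqA: "mat_inv n \<Theta>' * B * mat_frob p \<Theta>' = (N * ?A) * mat_frob p U" .
    have A'R: "mat_inv n \<Theta>' * B * mat_frob p \<Theta>' \<in> mat_over n R"
      unfolding eqA
      by (intro mat_over_mult[OF R] mat_over_frob[OF R] N UR assms(7))
    have "\<Theta>' * N = \<Theta>"
    proof -
      have "\<Theta>' * N = \<Theta> * (U * N)" unfolding TU by (rule assoc_mult_mat[OF Tc Uc Nc])
      then show ?thesis using UN Tc by simp
    qed
    then have "H_order R iota n t \<Theta> \<subseteq> H_order R iota n t \<Theta>'"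
      using S.H_sub[OF R T'c N] by simp
    moreover have "H_order R iota n t \<Theta>' \<subseteq> H_order R iota n t \<Theta>"
      unfolding TU by (rule S.H_sub[OF R Tc UR])
    ultimately show "mat_inv n \<Theta>' * B * mat_frob p \<Theta>' \<in> mat_over n R \<and>
           H_order R iota n t \<Theta>' = H_order R iota n t \<Theta>"
      using A'R by blast
  qed
qed

end
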